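(* Let $(X,\mathcal{O}(X))$ be a measurable space, $\mathcal{A}$ a unital $C^*$-algebra and $\mathcal{H}$ a Hilbert space. Let $\mathcal{I}:\mathcal{O}(X)\to CP(\mathcal{A},\mathcal{B}(\mathcal{H}))$ be a CP instrument with minimal bi-dilation $(\mathcal{K},\pi,E,V)$. Let $P_1,P_2$ be the orthogonal projections onto $\overline{\mathrm{span}}\{\pi(a)Vh:a\in\mathcal{A},h\in\mathcal{H}\}$ and $\overline{\mathrm{span}}\{E(A)Vh:A\in\mathcal{O}(X),h\in\mathcal{H}\}$ respectively. Then the following are equivalent: (i) $\mathcal{I}$ is decomposable; (ii) $P_1E(A)P_1VV^*=VV^*P_1E(A)P_1VV^*=VV^*P_1E(A)P_1$ for all $A\in\mathcal{O}(X)$; (iii) $P_2\pi(a)P_2VV^*=VV^*P_2\pi(a)P_2VV^*=VV^*\pi(a)P_2$ for all $a\in\mathcal{A}$.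
   Context: A CP instrument is a map $\mathcal{I}$ from $\mathcal{O}(X)$ to the completely positive maps $\mathcal{A}\to\mathcal{B}(\mathcal{H})$ such that for all $a\in\mathcal{A}$, $h,k\in\mathcal{H}$, $A\mapsto\langle h,\mathcal{I}(A)(a)k\rangle$ is a countably additive complex measure; write $\mathcal{I}(A,a)=\mathcal{I}(A)(a)$. Marginals: $\mu_\mathcal{I}(A)=\mathcal{I}(A,1_\mathcal{A})$, $\phi_\mathcal{I}=\mathcal{I}(X,\cdot)$. $\mathcal{I}$ is decomposable if $\mathcal{I}(A,a)=\phi_\mathcal{I}(a)\mu_\mathcal{I}(A)$ for all $a\in\mathcal{A}$, $A\in\mathcal{O}(X)$. A minimal bi-dilation of $\mathcal{I}$ is a quadruple $(\mathcal{K},\pi,E,V)$ with $\pi:\mathcal{A}\to\mathcal{B}(\mathcal{K})$ a unital $*$-homomorphism, $E:\mathcal{O}(X)\to\mathcal{B}(\mathcal{K})$ a spectral measure commuting with $\pi$, $V\in\mathcal{B}(\mathcal{H},\mathcal{K})$, with $\mathcal{I}(A,a)=V^*\pi(a)E(A)V$ for all $A,a$ and $\overline{\mathrm{span}}\{\pi(a)E(A)Vh\}=\mathcal{K}$; it exists and is unique up to unitary equivalence. *)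

theory Defs
  imports "HOL-Analysis.Analysis"
begin

class complex_vector = real_vector +
  fixes scaleC :: "complex \<Rightarrow> 'a \<Rightarrow> 'a" (infixr \<open>*\<^sub>C\<close> 75)
  assumes scaleC_add_right: "scaleC c (x + y) = scaleC c x + scaleC c y"
    and scaleC_add_left: "scaleC (c + d) x = scaleC c x + scaleC d x"
    and scaleC_scaleC: "scaleC c (scaleC d x) = scaleC (c * d) x"
    and scaleC_one: "scaleC 1 x = x"
    and scaleR_scaleC: "scaleR r x = scaleC (complex_of_real r) x"

class complex_normed_vector = real_normed_vector + complex_vector +
  assumes norm_scaleC: "norm (scaleC c x) = cmod c * norm x"

text \<open>Complex inner product: conjugate-linear in the first, linear in the second argument.\<close>
class complex_inner = complex_normed_vector +
  fixes cinner :: "'a \<Rightarrow> 'a \<Rightarrow> complex"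
  assumes cinner_conj: "cinner x y = cnj (cinner y x)"
    and cinner_add_right: "cinner x (y + z) = cinner x y + cinner x z"
    and cinner_scaleC_right: "cinner x (scaleC c y) = c * cinner x y"
    and cinner_self_nonneg: "0 \<le> Re (cinner x x)"
    and norm_eq_sqrt_cinner: "norm x = sqrt (Re (cinner x x))"

class chilbert_space = complex_inner + complete_space

class cstar_algebra_1 = complex_normed_vector + real_normed_algebra_1 + banach +
  fixes cstar :: "'a \<Rightarrow> 'a"
  assumes scaleC_mult_left: "scaleC c (x * y) = scaleC c x * y"
    and scaleC_mult_right: "scaleC c (x * y) = x * scaleC c y"
    and cstar_cstar: "cstar (cstar x) = x"
    and cstar_add: "cstar (x + y) = cstar x + cstar y"
    and cstar_scaleC: "cstar (scaleC c x) = scaleC (cnj c) (cstar x)"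
    and cstar_mult: "cstar (x * y) = cstar y * cstar x"
    and cstar_identity: "norm (cstar x * x) = (norm x)\<^sup>2"

definition cblinear :: "('a::complex_normed_vector \<Rightarrow> 'b::complex_normed_vector) \<Rightarrow> bool" where
  "cblinear T \<longleftrightarrow> (\<forall>x y. T (x + y) = T x + T y) \<and> (\<forall>c x. T (c *\<^sub>C x) = c *\<^sub>C T x)
     \<and> (\<exists>K. \<forall>x. norm (T x) \<le> norm x * K)"

definition adj :: "('h::chilbert_space \<Rightarrow> 'k::chilbert_space) \<Rightarrow> ('k \<Rightarrow> 'h)" where
  "adj T = (THE S. \<forall>x y. cinner (T x) y = cinner x (S y))"

definition cspan :: "'a::complex_vector set \<Rightarrow> 'a set" where
  "cspan S = {x. \<exists>F c. finite F \<and> F \<subseteq> S \<and> x = (\<Sum>s\<in>F. c s *\<^sub>C s)}"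

definition is_orth_proj :: "('h::chilbert_space \<Rightarrow> 'h) \<Rightarrow> 'h set \<Rightarrow> bool" where
  "is_orth_proj P C \<longleftrightarrow> (\<forall>x. P x \<in> C \<and> (\<forall>y\<in>C. cinner y (x - P x) = 0))"

definition is_proj :: "('h::chilbert_space \<Rightarrow> 'h) \<Rightarrow> bool" where
  "is_proj P \<longleftrightarrow> cblinear P \<and> P \<circ> P = P \<and> adj P = P"

text \<open>A linear map \<open>\<phi> : A \<rightarrow> B(H)\<close> is completely positive if every amplification
  \<open>\<phi>\<^sub>n : M\<^sub>n(A) \<rightarrow> M\<^sub>n(B(H)) = B(H\<^sup>n)\<close> is positive. Positive elements of \<open>M\<^sub>n(A)\<close> are those of the
  form \<open>B\<^sup>*B\<close>, and positivity of an operator matrix \<open>T\<close> on \<open>H\<^sup>n\<close> means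
  \<open>\<Sum>\<^sub>i\<^sub>j \<langle>h\<^sub>i, T\<^sub>i\<^sub>j h\<^sub>j\<rangle> \<ge> 0\<close> for all \<open>h\<close>.\<close>
definition completely_positive :: "('a::cstar_algebra_1 \<Rightarrow> ('h::chilbert_space \<Rightarrow> 'h)) \<Rightarrow> bool" where
  "completely_positive \<phi> \<longleftrightarrow>
     (\<forall>a. cblinear (\<phi> a)) \<and>
     (\<forall>a b. \<phi> (a + b) = (\<lambda>x. \<phi> a x + \<phi> b x)) \<and>
     (\<forall>c a. \<phi> (c *\<^sub>C a) = (\<lambda>x. c *\<^sub>C \<phi> a x)) \<and>
     (\<forall>(n::nat) (B::nat \<Rightarrow> nat \<Rightarrow> 'a) (h::nat \<Rightarrow> 'h).
        let s = (\<Sum>i<n. \<Sum>j<n. cinner (h i) (\<phi> (\<Sum>k<n. cstar (B k i) * B k j) (h j)))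
        in Im s = 0 \<and> 0 \<le> Re s)"

definition cp_instrument ::
  "'x measure \<Rightarrow> ('x set \<Rightarrow> 'a::cstar_algebra_1 \<Rightarrow> 'h::chilbert_space \<Rightarrow> 'h) \<Rightarrow> bool" where
  "cp_instrument M I \<longleftrightarrow>
     (\<forall>A\<in>sets M. completely_positive (I A)) \<and>
     (\<forall>a h k F. range F \<subseteq> sets M \<longrightarrow> disjoint_family F \<longrightarrow>
        (\<lambda>n. cinner h (I (F n) a k)) sums cinner h (I (\<Union>n. F n) a k))"

definition instr_obs :: "('x set \<Rightarrow> 'a::cstar_algebra_1 \<Rightarrow> 'h \<Rightarrow> 'h) \<Rightarrow> 'x set \<Rightarrow> 'h \<Rightarrow> 'h" where
  "instr_obs I A = I A 1"

definition instr_channel :: "'x measure \<Rightarrow> ('x set \<Rightarrow> 'a \<Rightarrow> 'h \<Rightarrow> 'h) \<Rightarrow> 'a \<Rightarrow> 'h \<Rightarrow> 'h" where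
  "instr_channel M I = I (space M)"

definition decomposable ::
  "'x measure \<Rightarrow> ('x set \<Rightarrow> 'a::cstar_algebra_1 \<Rightarrow> 'h::chilbert_space \<Rightarrow> 'h) \<Rightarrow> bool" where
  "decomposable M I \<longleftrightarrow>
     (\<forall>a. \<forall>A\<in>sets M. I A a = instr_channel M I a \<circ> instr_obs I A)"

definition spectral_measure :: "'x measure \<Rightarrow> ('x set \<Rightarrow> 'k::chilbert_space \<Rightarrow> 'k) \<Rightarrow> bool" where
  "spectral_measure M E \<longleftrightarrow>
     (\<forall>A\<in>sets M. is_proj (E A)) \<and> E (space M) = id \<and>
     (\<forall>A\<in>sets M. \<forall>B\<in>sets M. E (A \<inter> B) = E A \<circ> E B) \<and>
     (\<forall>h k F. range F \<subseteq> sets M \<longrightarrow> disjoint_family F \<longrightarrow>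
        (\<lambda>n. cinner h (E (F n) k)) sums cinner h (E (\<Union>n. F n) k))"

definition unital_star_hom :: "('a::cstar_algebra_1 \<Rightarrow> ('k::chilbert_space \<Rightarrow> 'k)) \<Rightarrow> bool" where
  "unital_star_hom \<pi> \<longleftrightarrow>
     (\<forall>a. cblinear (\<pi> a)) \<and>
     (\<forall>a b. \<pi> (a + b) = (\<lambda>x. \<pi> a x + \<pi> b x)) \<and>
     (\<forall>c a. \<pi> (c *\<^sub>C a) = (\<lambda>x. c *\<^sub>C \<pi> a x)) \<and>
     (\<forall>a b. \<pi> (a * b) = \<pi> a \<circ> \<pi> b) \<and>
     (\<forall>a. \<pi> (cstar a) = adj (\<pi> a)) \<and>
     \<pi> 1 = id"

definition minimal_bidilation ::
  "'x measure \<Rightarrow> ('x set \<Rightarrow> 'a::cstar_algebra_1 \<Rightarrow> 'h::chilbert_space \<Rightarrow> 'h)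
    \<Rightarrow> ('a \<Rightarrow> 'k::chilbert_space \<Rightarrow> 'k) \<Rightarrow> ('x set \<Rightarrow> 'k \<Rightarrow> 'k) \<Rightarrow> ('h \<Rightarrow> 'k) \<Rightarrow> bool" where
  "minimal_bidilation M I \<pi> E V \<longleftrightarrow>
     unital_star_hom \<pi> \<and> spectral_measure M E \<and>
     (\<forall>a. \<forall>A\<in>sets M. \<pi> a \<circ> E A = E A \<circ> \<pi> a) \<and>
     cblinear V \<and>
     (\<forall>a. \<forall>A\<in>sets M. I A a = adj V \<circ> \<pi> a \<circ> E A \<circ> V) \<and>
     closure (cspan {\<pi> a (E A (V h)) | a A h. A \<in> sets M}) = UNIV"

end

theory Submission
  imports Defs "HOL-Analysis.Analysis"
begin


lemma scaleC_zero_right[simp]: "c *\<^sub>C (0::'a::complex_vector) = 0"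
proof -
  have "c *\<^sub>C (0::'a) + c *\<^sub>C 0 = c *\<^sub>C 0" by (simp flip: scaleC_add_right)
  then show ?thesis by simp
qed

lemma scaleC_diff_right: "c *\<^sub>C ((x::'a::complex_vector) - y) = c *\<^sub>C x - c *\<^sub>C y"
proof -
  have "c *\<^sub>C (x - y) + c *\<^sub>C y = c *\<^sub>C x" by (simp flip: scaleC_add_right)
  then show ?thesis by (simp add: eq_diff_eq)
qed

lemma scaleC_diff_left: "(c - d) *\<^sub>C (x::'a::complex_vector) = c *\<^sub>C x - d *\<^sub>C x"
proof -
  have "(c - d) *\<^sub>C x + d *\<^sub>C x = c *\<^sub>C x" by (simp flip: scaleC_add_left)
  then show ?thesis by (simp add: eq_diff_eq)
qed

lemma cinner_add_left: "cinner (x + y) (z::'a::complex_inner) = cinner x z + cinner y z"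
  by (subst (1 2 3) cinner_conj) (simp add: cinner_add_right)
lemma cinner_scaleC_left: "cinner (c *\<^sub>C x) (y::'a::complex_inner) = cnj c * cinner x y"
  by (subst (1 2) cinner_conj) (simp add: cinner_scaleC_right)
lemma cinner_zero_right[simp]: "cinner (x::'a::complex_inner) 0 = 0"
proof -
  have "cinner x (0::'a) + cinner x 0 = cinner x 0" by (simp flip: cinner_add_right)
  then show ?thesis by simp
qed
lemma cinner_zero_left[simp]: "cinner 0 (x::'a::complex_inner) = 0"
  by (subst cinner_conj) simp
lemma cinner_diff_right: "cinner x (y - z) = cinner x y - cinner (x::'a::complex_inner) z"
proof -
  have "cinner x (y - z) + cinner x z = cinner x y" by (simp flip: cinner_add_right)
  then show ?thesis by (simp add: eq_diff_eq)
qed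
lemma cinner_diff_left: "cinner (x - y) z = cinner x z - cinner (y::'a::complex_inner) z"
  by (subst (1 2 3) cinner_conj) (simp add: cinner_diff_right)
lemma cinner_self_Im: "Im (cinner x (x::'a::complex_inner)) = 0"
proof -
  have "Im (cinner x x) = Im (cnj (cinner x x))" by (subst cinner_conj) simp
  then show ?thesis by simp
qed
lemma cinner_self_real: "cinner x (x::'a::complex_inner) = complex_of_real (Re (cinner x x))"
  by (simp add: cinner_self_Im complex_eq_iff)
lemma norm_sq_cinner: "(norm x)\<^sup>2 = Re (cinner x (x::'a::complex_inner))"
  by (simp add: norm_eq_sqrt_cinner cinner_self_nonneg)
lemma cinner_self_eq_0: "cinner x x = 0 \<longleftrightarrow> (x::'a::complex_inner) = 0"
proof
  assume "cinner x x = 0"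
  then have "norm x = 0" by (simp add: norm_eq_sqrt_cinner)
  then show "x = 0" by simp
qed simp
lemma cinner_ext: "(\<And>z. cinner z x = cinner z y) \<Longrightarrow> x = (y::'a::complex_inner)"
proof -
  assume h: "\<And>z. cinner z x = cinner z y"
  have "cinner (x - y) (x - y) = 0" by (simp add: cinner_diff_right h)
  then show ?thesis by (simp add: cinner_self_eq_0)
qed
lemma cinner_ext2: "(\<And>z. cinner x z = cinner y z) \<Longrightarrow> x = (y::'a::complex_inner)"
  by (rule cinner_ext, subst (1 2) cinner_conj, simp)

lemma cinner_sum_left: "cinner (\<Sum>s\<in>F. f s) (y::'a::complex_inner) = (\<Sum>s\<in>F. cinner (f s) y)"
  by (induction F rule: infinite_finite_induct) (auto simp: cinner_add_left)

lemma cinner_expand: "cinner (x + y) (x + y) = cinner x x + cinner y y + 2 * of_real (Re (cinner x (y::'a::complex_inner)))"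
proof -
  have "cinner y x = cnj (cinner x y)" by (rule cinner_conj)
  then have "cinner x y + cinner y x = 2 * of_real (Re (cinner x y))"
    by (simp add: complex_eq_iff)
  then show ?thesis by (simp add: cinner_add_left cinner_add_right algebra_simps)
qed

lemma norm_add_sq: "(norm (x + y))\<^sup>2 = (norm x)\<^sup>2 + (norm y)\<^sup>2 + 2 * Re (cinner x (y::'a::complex_inner))"
  by (simp add: norm_sq_cinner cinner_expand)



lemma cauchy_schwarz: "cmod (cinner x y) \<le> norm x * norm (y::'a::complex_inner)"
proof (cases "y = 0")
  case True then show ?thesis by simp
next
  case False
  define n where "n = Re (cinner y y)"
  have yy: "cinner y y = of_real n" unfolding n_def by (rule cinner_self_real)
  have n0: "n > 0"
  proof -
    have "n \<ge> 0" by (simp add: n_def cinner_self_nonneg)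
    moreover have "n \<noteq> 0"
    proof
      assume "n = 0"
      then have "cinner y y = 0" by (simp add: yy)
      then show False using False by (simp add: cinner_self_eq_0)
    qed
    ultimately show ?thesis by simp
  qed
  define c where "c = cinner y x"
  have xy: "cinner x y = cnj c" unfolding c_def by (rule cinner_conj)
  define t where "t = c / of_real n"
  have "cinner (x - t *\<^sub>C y) (x - t *\<^sub>C y) =
     cinner x x - t * cinner x y - cnj t * cinner y x + cnj t * t * cinner y y"
    by (simp add: cinner_diff_left cinner_diff_right cinner_scaleC_left cinner_scaleC_right algebra_simps)
  also have "\<dots> = cinner x x - c * cnj c / of_real n"
    using n0 by (simp add: t_def yy xy c_def[symmetric] field_simps)
  finally have "0 \<le> Re (cinner x x - c * cnj c / of_real n)"
    using cinner_self_nonneg[of "x - t *\<^sub>C y"] by simp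
  then have "Re (c * cnj c) / n \<le> Re (cinner x x)"
    by simp
  moreover have "Re (c * cnj c) = (cmod c)\<^sup>2" by (simp add: complex_mult_cnj cmod_power2)
  ultimately have "(cmod c)\<^sup>2 \<le> (norm x)\<^sup>2 * (norm y)\<^sup>2"
    using n0 by (simp add: norm_sq_cinner n_def[symmetric] field_simps)
  then have "(cmod c)\<^sup>2 \<le> (norm x * norm y)\<^sup>2" by (simp add: power_mult_distrib)
  then have "cmod c \<le> norm x * norm y"
    by (rule power2_le_imp_le) simp
  moreover have "cmod (cinner x y) = cmod c" by (simp add: xy)
  ultimately show ?thesis by simp
qed



lemma norm_diff_sq: "(norm (x - y))\<^sup>2 = (norm x)\<^sup>2 + (norm y)\<^sup>2 - 2 * Re (cinner x (y::'a::complex_inner))"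
proof -
  have "cinner y x = cnj (cinner x y)" by (rule cinner_conj)
  then have "Re (cinner (x - y) (x - y)) = Re (cinner x x) + Re (cinner y y) - 2 * Re (cinner x y)"
    by (simp add: cinner_diff_left cinner_diff_right)
  then show ?thesis by (simp add: norm_sq_cinner)
qed

lemma parallelogram: "(norm (x - y))\<^sup>2 + (norm (x + y))\<^sup>2 = 2 * (norm x)\<^sup>2 + 2 * (norm (y::'a::complex_inner))\<^sup>2"
  by (simp add: norm_diff_sq norm_add_sq)

lemma bounded_linear_cinner_left: "bounded_linear (\<lambda>z::'a::complex_inner. cinner z y)"
proof (rule bounded_linear_intro[where K="norm y"])
  show "cinner (x + z) y = cinner x y + cinner z y" for x z by (simp add: cinner_add_left)
  show "cinner (r *\<^sub>R x) y = r *\<^sub>R cinner x y" for r x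
    by (simp add: scaleR_scaleC cinner_scaleC_left scaleR_conv_of_real)
  show "norm (cinner x y) \<le> norm x * norm y" for x by (simp add: cauchy_schwarz)
qed

lemma orth_closure_cspan:
  assumes "\<forall>s\<in>S. cinner s y = 0" and "z \<in> closure (cspan S)"
  shows "cinner z (y::'a::complex_inner) = 0"
proof -
  have "cspan S \<subseteq> {z. cinner z y = 0}"
  proof
    fix z assume "z \<in> cspan S"
    then obtain F c where "F \<subseteq> S" "z = (\<Sum>s\<in>F. c s *\<^sub>C s)" unfolding cspan_def by blast
    then show "z \<in> {z. cinner z y = 0}" using assms(1)
      by (auto simp: cinner_sum_left cinner_scaleC_left intro!: sum.neutral)
  qed
  moreover have "closed {z. cinner z y = 0}"
    by (rule closed_Collect_eq) (auto intro: linear_continuous_on bounded_linear_cinner_left)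
  ultimately have "closure (cspan S) \<subseteq> {z. cinner z y = 0}" by (rule closure_minimal)
  then show ?thesis using assms(2) by blast
qed



lemma riesz:
  fixes f :: "'a::chilbert_space \<Rightarrow> complex"
  assumes add: "\<And>x y. f (x + y) = f x + f y"
    and sc: "\<And>c x. f (c *\<^sub>C x) = c * f x"
    and bd: "\<And>x. cmod (f x) \<le> norm x * K"
  shows "\<exists>z. \<forall>x. f x = cinner z x"
proof (cases "\<forall>x. f x = 0")
  case True then show ?thesis by (intro exI[of _ 0]) simp
next
  case False
  have bl: "bounded_linear f"
  proof (rule bounded_linear_intro[where K=K])
    show "f (x + y) = f x + f y" for x y by (rule add)
    show "f (r *\<^sub>R x) = r *\<^sub>R f x" for r x by (simp add: scaleR_scaleC sc scaleR_conv_of_real)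
    show "norm (f x) \<le> norm x * K" for x using bd by simp
  qed
  have diff: "f (x - y) = f x - f y" for x y using bl by (simp add: linear_diff bounded_linear.linear)
  have f0: "f 0 = 0" using bl by (simp add: linear_0 bounded_linear.linear)
  from False obtain x1 where x1: "f x1 \<noteq> 0" by blast
  define C where "C = {x. f x = 1}"
  have x0C: "(1 / f x1) *\<^sub>C x1 \<in> C" using x1 by (simp add: C_def sc)
  define d where "d = Inf (norm ` C)"
  have ne: "norm ` C \<noteq> {}" using x0C by blast
  have bdd: "bdd_below (norm ` C)" by (rule bdd_belowI[of _ 0]) auto
  have d_le: "d \<le> norm v" if "v \<in> C" for v
    unfolding d_def using bdd that by (simp add: cInf_lower)
  have d0: "d \<ge> 0" unfolding d_def using ne by (auto intro: cInf_greatest)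
  have "\<forall>n::nat. \<exists>x. x \<in> C \<and> norm x < d + inverse (real (Suc n))"
  proof
    fix n :: nat
    have "Inf (norm ` C) < d + inverse (real (Suc n))" by (simp add: d_def)
    then have "\<exists>y\<in>norm ` C. y < d + inverse (real (Suc n))"
      by (simp only: cInf_less_iff[OF ne bdd])
    then show "\<exists>x. x \<in> C \<and> norm x < d + inverse (real (Suc n))"
      by (simp only: image_iff bex_simps Bex_def) blast
  qed
  then have "\<exists>xs. \<forall>n. xs n \<in> C \<and> norm (xs n) < d + inverse (real (Suc n))"
    by (rule choice)
  then obtain xs where xs0: "\<forall>n. xs n \<in> C \<and> norm (xs n) < d + inverse (real (Suc n))"
    by (elim exE)
  have xs: "xs n \<in> C \<and> norm (xs n) < d + inverse (real (Suc n))" for n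
    using xs0 by (rule spec)
  have key: "(norm (xs m - xs n))\<^sup>2 \<le> (8 * d + 4) * \<delta>"
    if "inverse (real (Suc m)) \<le> \<delta>" "inverse (real (Suc n)) \<le> \<delta>" "\<delta> \<le> 1" for m n \<delta>
  proof -
    have "f ((1/2::real) *\<^sub>R (xs m + xs n)) = 1"
      using xs[of m] xs[of n] bl by (simp add: C_def add scaleR_scaleC sc)
    then have "d \<le> norm ((1/2::real) *\<^sub>R (xs m + xs n))" by (intro d_le) (simp add: C_def)
    then have h1: "2 * d \<le> norm (xs m + xs n)" by simp
    have m: "norm (xs m) \<le> d + \<delta>" using xs[of m] that by simp
    have n: "norm (xs n) \<le> d + \<delta>" using xs[of n] that by simp
    have "(norm (xs m - xs n))\<^sup>2 = 2 * (norm (xs m))\<^sup>2 + 2 * (norm (xs n))\<^sup>2 - (norm (xs m + xs n))\<^sup>2"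
      using parallelogram[of "xs m" "xs n"] by simp
    also have "\<dots> \<le> 2 * (d + \<delta>)\<^sup>2 + 2 * (d + \<delta>)\<^sup>2 - (2 * d)\<^sup>2"
      using m n h1 d0 by (intro diff_mono add_mono mult_left_mono power_mono) auto
    also have "\<dots> = 8 * d * \<delta> + 4 * \<delta>\<^sup>2" by (simp add: power2_eq_square algebra_simps)
    also have "\<dots> \<le> (8 * d + 4) * \<delta>"
    proof -
      have "\<delta> \<ge> 0" using that(1) by (rule order_trans[rotated]) simp
      then have "\<delta>\<^sup>2 \<le> \<delta>" using that(3) by (simp add: power2_eq_square mult_left_le)
      then show ?thesis by (simp add: algebra_simps)
    qed
    finally show ?thesis .
  qed
  have "Cauchy xs"
  proof (rule CauchyI)
    fix e :: real assume e: "0 < e"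
    define \<delta> where "\<delta> = min 1 (e\<^sup>2 / (8 * d + 5))"
    have \<delta>0: "\<delta> > 0" using e d0 by (simp add: \<delta>_def)
    obtain M where M: "M > 0" "inverse (real M) < \<delta>" using ex_inverse_of_nat_less[OF \<delta>0] by blast
    have small: "inverse (real (Suc k)) \<le> \<delta>" if "k \<ge> M" for k
    proof -
      have "inverse (real (Suc k)) \<le> inverse (real M)"
        using M that by (simp add: le_imp_inverse_le)
      then show ?thesis using M(2) by (rule order_trans[OF _ less_imp_le])
    qed
    show "\<exists>M. \<forall>m\<ge>M. \<forall>n\<ge>M. norm (xs m - xs n) < e"
    proof (intro exI allI impI)
      fix m n assume "m \<ge> M" "n \<ge> M"
      then have "(norm (xs m - xs n))\<^sup>2 \<le> (8 * d + 4) * \<delta>"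
        by (intro key small) (auto simp: \<delta>_def)
      also have "\<dots> \<le> (8 * d + 4) * (e\<^sup>2 / (8 * d + 5))"
      proof (rule mult_left_mono)
        show "\<delta> \<le> e\<^sup>2 / (8 * d + 5)" unfolding \<delta>_def by (rule min.cobounded2)
        show "0 \<le> 8 * d + 4" using d0 by simp
      qed
      also have "\<dots> = e\<^sup>2 * (8 * d + 4) / (8 * d + 5)" by simp
      also have "\<dots> < e\<^sup>2"
      proof -
        have pos: "8 * d + 5 > 0" using d0 by simp
        have e2: "e\<^sup>2 > 0" using e by simp
        have "e\<^sup>2 * (8 * d + 4) < e\<^sup>2 * (8 * d + 5)" using e2 by (intro mult_strict_left_mono) auto
        then show ?thesis using pos by (simp add: pos_divide_less_eq)
      qed
      finally show "norm (xs m - xs n) < e"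
        using e by (simp add: power2_less_imp_less)
    qed
  qed
  then obtain u where u: "xs \<longlonglongrightarrow> u" using Cauchy_convergent_iff convergent_def by blast
  have "(\<lambda>n. f (xs n)) \<longlonglongrightarrow> f u" using bl u by (rule bounded_linear.tendsto)
  moreover have "(\<lambda>n. f (xs n)) = (\<lambda>n. 1)" using xs by (simp add: C_def)
  ultimately have fu: "f u = 1" using LIMSEQ_unique[OF _ tendsto_const[of 1]] by (metis (no_types))
  have "norm u \<le> d"
  proof (rule LIMSEQ_le)
    show "(\<lambda>n. norm (xs n)) \<longlonglongrightarrow> norm u" using u by (rule tendsto_norm)
    show "(\<lambda>n. d + inverse (real (Suc n))) \<longlonglongrightarrow> d"
      using tendsto_add[OF tendsto_const LIMSEQ_inverse_real_of_nat, of d] by simp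
    show "\<exists>N. \<forall>n\<ge>N. norm (xs n) \<le> d + inverse (real (Suc n))"
      using xs less_imp_le by blast
  qed
  then have umin: "norm u \<le> norm v" if "v \<in> C" for v using d_le[OF that] by simp
  have orth: "cinner u x = 0" if fx: "f x = 0" for x
  proof (rule ccontr)
    define c where "c = cinner u x"
    assume "cinner u x \<noteq> 0"
    then have c0: "cmod c > 0" by (simp add: c_def)
    define s where "s = 1 / ((norm x)\<^sup>2 + 1)"
    have s0: "s > 0" by (simp add: s_def add_nonneg_pos)
    have sx: "s * (norm x)\<^sup>2 < 1"
    proof -
      have p: "0 < (norm x)\<^sup>2 + 1" by (simp add: add_nonneg_pos)
      have "s * (norm x)\<^sup>2 = (norm x)\<^sup>2 / ((norm x)\<^sup>2 + 1)" by (simp add: s_def)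
      also have "\<dots> < 1" using p by (simp add: pos_divide_less_eq)
      finally show ?thesis .
    qed
    define t where "t = - (of_real s * cnj c)"
    have "u + t *\<^sub>C x \<in> C" using fu fx by (simp add: C_def add sc)
    then have "(norm u)\<^sup>2 \<le> (norm (u + t *\<^sub>C x))\<^sup>2" using umin by (simp add: power_mono)
    also have "\<dots> = (norm u)\<^sup>2 + (cmod t * norm x)\<^sup>2 + 2 * Re (t * c)"
      by (simp add: norm_add_sq norm_scaleC cinner_scaleC_right c_def)
    also have "Re (t * c) = - s * (cmod c)\<^sup>2"
    proof -
      have "Re (t * c) = - s * ((Re c)\<^sup>2 + (Im c)\<^sup>2)" by (simp add: t_def power2_eq_square algebra_simps)
      then show ?thesis by (simp add: cmod_power2)
    qed
    also have "cmod t = s * cmod c" using s0 by (simp add: t_def norm_mult)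
    finally have "0 \<le> (s * cmod c * norm x)\<^sup>2 - 2 * s * (cmod c)\<^sup>2" by simp
    then have "2 * s * (cmod c)\<^sup>2 \<le> s * (cmod c)\<^sup>2 * (s * (norm x)\<^sup>2)"
      by (simp add: power_mult_distrib power2_eq_square algebra_simps)
    also have "\<dots> < s * (cmod c)\<^sup>2 * 1"
      using sx s0 c0 by (intro mult_strict_left_mono) auto
    finally show False using s0 c0 by simp
  qed
  have u0: "cinner u u \<noteq> 0" using fu f0 by (auto simp: cinner_self_eq_0)
  show ?thesis
  proof (intro exI allI)
    fix x
    have "f (x - f x *\<^sub>C u) = 0" using fu by (simp add: diff sc)
    then have "cinner u (x - f x *\<^sub>C u) = 0" by (rule orth)
    then have "cinner u x = f x * cinner u u" by (simp add: cinner_diff_right cinner_scaleC_right)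
    then show "f x = cinner (inverse (cnj (cinner u u)) *\<^sub>C u) x"
      using u0 by (simp add: cinner_scaleC_left field_simps)
  qed
qed



lemma adj_prop:
  fixes T :: "'h::chilbert_space \<Rightarrow> 'k::chilbert_space"
  assumes "cblinear T"
  shows "cinner (T x) y = cinner x (adj T y)"
proof -
  from assms have add: "\<And>x y. T (x + y) = T x + T y" and sc: "\<And>c x. T (c *\<^sub>C x) = c *\<^sub>C T x"
    and "\<exists>K. \<forall>x. norm (T x) \<le> norm x * K" unfolding cblinear_def by blast+
  then obtain K where K: "\<And>x. norm (T x) \<le> norm x * K" by blast
  have "\<forall>y. \<exists>z. \<forall>x. cinner y (T x) = cinner z x"
  proof
    fix y
    show "\<exists>z. \<forall>x. cinner y (T x) = cinner z x"
    proof (rule riesz[where K="norm y * K"])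
      show "cinner y (T (a + b)) = cinner y (T a) + cinner y (T b)" for a b
        by (simp add: add cinner_add_right)
      show "cinner y (T (c *\<^sub>C a)) = c * cinner y (T a)" for c a
        by (simp add: sc cinner_scaleC_right)
      show "cmod (cinner y (T a)) \<le> norm a * (norm y * K)" for a
      proof -
        have "cmod (cinner y (T a)) \<le> norm y * norm (T a)" by (rule cauchy_schwarz)
        also have "\<dots> \<le> norm y * (norm a * K)" by (rule mult_left_mono[OF K norm_ge_zero])
        finally show ?thesis by (simp add: algebra_simps)
      qed
    qed
  qed
  then have "\<exists>S. \<forall>y x. cinner y (T x) = cinner (S y) x" by (rule choice)
  then obtain S where S: "\<forall>y x. cinner y (T x) = cinner (S y) x" by (elim exE)
  have PS: "\<forall>x y. cinner (T x) y = cinner x (S y)"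
  proof (intro allI)
    fix x y
    have "cinner (T x) y = cnj (cinner y (T x))" by (rule cinner_conj)
    also have "\<dots> = cnj (cinner (S y) x)" using S by simp
    also have "\<dots> = cinner x (S y)" by (simp flip: cinner_conj)
    finally show "cinner (T x) y = cinner x (S y)" .
  qed
  have uniq: "S' = S" if "\<forall>x y. cinner (T x) y = cinner x (S' y)" for S'
  proof
    fix y
    show "S' y = S y" by (rule cinner_ext) (use that PS in simp)
  qed
  have "\<forall>x y. cinner (T x) y = cinner x (adj T y)"
    unfolding adj_def
    by (rule theI[where P="\<lambda>S. \<forall>x y. cinner (T x) y = cinner x (S y)" and a=S, OF PS]) (use uniq in blast)
  then show ?thesis by simp
qed



lemma cblinear_diff: "cblinear T \<Longrightarrow> T (x - y) = T x - T y"
proof -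
  assume "cblinear T"
  then have "T (x - y) + T y = T x" unfolding cblinear_def by (metis diff_add_cancel)
  then show ?thesis by (simp add: eq_diff_eq)
qed

lemma proj_fix: "is_orth_proj P C \<Longrightarrow> s \<in> C \<Longrightarrow> P s = s"
proof -
  assume P: "is_orth_proj P C" and s: "s \<in> C"
  have "cinner s (s - P s) = 0" "cinner (P s) (s - P s) = 0"
    using P s unfolding is_orth_proj_def by auto
  then have "cinner (s - P s) (s - P s) = 0" by (simp add: cinner_diff_left)
  then show ?thesis by (simp add: cinner_self_eq_0)
qed

lemma proj_sa: "is_orth_proj P C \<Longrightarrow> cinner (P x) y = cinner x (P y)"
proof -
  assume P: "is_orth_proj P C"
  have "cinner (P x) (y - P y) = 0" "cinner (P y) (x - P x) = 0"
    using P unfolding is_orth_proj_def by auto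
  then have "cinner (P x) y = cinner (P x) (P y)" "cinner (P y) x = cinner (P y) (P x)"
    by (simp_all add: cinner_diff_right)
  then show ?thesis by (metis cinner_conj)
qed

lemma proj_diff: "is_orth_proj P C \<Longrightarrow> P (x - y) = P x - P y"
  by (rule cinner_ext) (simp add: proj_sa[symmetric] cinner_diff_right)

lemma proj_zero:
  assumes P: "is_orth_proj P (closure (cspan S))" and y: "\<forall>s\<in>S. cinner s y = 0"
  shows "P y = 0"
proof -
  have inC: "P y \<in> closure (cspan S)" using P unfolding is_orth_proj_def by blast
  have "cinner (P y) y = 0" by (rule orth_closure_cspan[OF y inC])
  moreover have "cinner (P y) (y - P y) = 0" using P inC unfolding is_orth_proj_def by blast
  ultimately have "cinner (P y) (P y) = 0" by (simp add: cinner_diff_right)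
  then show ?thesis by (simp add: cinner_self_eq_0)
qed

lemma in_closure_cspan: "s \<in> S \<Longrightarrow> s \<in> closure (cspan S)"
proof -
  assume "s \<in> S"
  then have "s \<in> cspan S" unfolding cspan_def
    by (intro CollectI exI[of _ "{s}"] exI[of _ "\<lambda>_. 1"]) (simp add: scaleC_one)
  then show ?thesis using closure_subset by blast
qed

lemma proj_fix_gen: "is_orth_proj P (closure (cspan S)) \<Longrightarrow> s \<in> S \<Longrightarrow> P s = s"
  by (rule proj_fix[of P "closure (cspan S)"]) (auto intro: in_closure_cspan)



theorem theorem2p29:
  fixes M :: "'x measure"
    and I :: "'x set \<Rightarrow> 'a::cstar_algebra_1 \<Rightarrow> 'h::chilbert_space \<Rightarrow> 'h"
    and \<pi> :: "'a \<Rightarrow> 'k::chilbert_space \<Rightarrow> 'k"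
    and E :: "'x set \<Rightarrow> 'k \<Rightarrow> 'k"
    and V :: "'h \<Rightarrow> 'k"
    and P1 P2 :: "'k \<Rightarrow> 'k"
  assumes "cp_instrument M I"
    and "minimal_bidilation M I \<pi> E V"
    and "is_orth_proj P1 (closure (cspan {\<pi> a (V h) | a h. True}))"
    and "is_orth_proj P2 (closure (cspan {E A (V h) | A h. A \<in> sets M}))"
  shows "(decomposable M I \<longleftrightarrow>
           (\<forall>A\<in>sets M.
              P1 \<circ> E A \<circ> P1 \<circ> V \<circ> adj V = V \<circ> adj V \<circ> P1 \<circ> E A \<circ> P1 \<circ> V \<circ> adj V \<and>
              V \<circ> adj V \<circ> P1 \<circ> E A \<circ> P1 \<circ> V \<circ> adj V = V \<circ> adj V \<circ> P1 \<circ> E A \<circ> P1))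
       \<and> (decomposable M I \<longleftrightarrow>
           (\<forall>a.
              P2 \<circ> \<pi> a \<circ> P2 \<circ> V \<circ> adj V = V \<circ> adj V \<circ> P2 \<circ> \<pi> a \<circ> P2 \<circ> V \<circ> adj V \<and>
              V \<circ> adj V \<circ> P2 \<circ> \<pi> a \<circ> P2 \<circ> V \<circ> adj V = V \<circ> adj V \<circ> \<pi> a \<circ> P2))"
proof -
  define V' where "V' = adj V"
  have mb: "minimal_bidilation M I \<pi> E V" by (rule assms(2))
  have ush: "unital_star_hom \<pi>" and sm: "spectral_measure M E" and Vlin: "cblinear V"
    and IA: "\<And>a A. A \<in> sets M \<Longrightarrow> I A a = adj V \<circ> \<pi> a \<circ> E A \<circ> V"
    using mb unfolding minimal_bidilation_def by auto
  have \<pi>lin: "\<And>a. cblinear (\<pi> a)" and \<pi>adj: "\<And>a. \<pi> (cstar a) = adj (\<pi> a)" and \<pi>1: "\<pi> 1 = id"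
    using ush unfolding unital_star_hom_def by auto
  have Eproj: "\<And>A. A \<in> sets M \<Longrightarrow> is_proj (E A)" and EX: "E (space M) = id"
    using sm unfolding spectral_measure_def by auto
  have Elin: "\<And>A. A \<in> sets M \<Longrightarrow> cblinear (E A)" and Eadj: "\<And>A. A \<in> sets M \<Longrightarrow> adj (E A) = E A"
    using Eproj unfolding is_proj_def by auto
  have sX: "space M \<in> sets M" by simp
  have P1: "is_orth_proj P1 (closure (cspan {\<pi> a (V h) | a h. True}))" by (rule assms(3))
  have P2: "is_orth_proj P2 (closure (cspan {E A (V h) | A h. A \<in> sets M}))" by (rule assms(4))

  have hV: "\<And>h k. cinner (V h) k = cinner h (V' k)" unfolding V'_def by (rule adj_prop[OF Vlin])
  have hV2: "\<And>h k. cinner k (V h) = cinner (V' k) h"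
    by (subst (1 2) cinner_conj) (simp add: hV)
  have h\<pi>: "\<And>a x y. cinner (\<pi> a x) y = cinner x (\<pi> (cstar a) y)"
    by (simp add: \<pi>adj adj_prop[OF \<pi>lin])
  have h\<pi>2: "\<And>a x y. cinner x (\<pi> a y) = cinner (\<pi> (cstar a) x) y"
    using h\<pi> by (simp add: cstar_cstar)
  have hE: "\<And>A x y. A \<in> sets M \<Longrightarrow> cinner (E A x) y = cinner x (E A y)"
    using adj_prop[OF Elin] Eadj by metis
  have V'diff: "\<And>x y. V' (x - y) = V' x - V' y"
    by (rule cinner_ext) (simp add: hV[symmetric] cinner_diff_right)
  have Vdiff: "\<And>x y. V (x - y) = V x - V y" by (rule cblinear_diff[OF Vlin])
  have \<pi>diff: "\<And>a x y. \<pi> a (x - y) = \<pi> a x - \<pi> a y" by (rule cblinear_diff[OF \<pi>lin])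
  have Ediff: "\<And>A x y. A \<in> sets M \<Longrightarrow> E A (x - y) = E A x - E A y" by (rule cblinear_diff[OF Elin])
  have hW: "\<And>x y. cinner (V (V' x)) y = cinner x (V (V' y))"
    by (simp add: hV hV2)
  have P1diff: "\<And>x y. P1 (x - y) = P1 x - P1 y" by (rule proj_diff[OF P1])
  have P2diff: "\<And>x y. P2 (x - y) = P2 x - P2 y" by (rule proj_diff[OF P2])
  have P1sa: "\<And>x y. cinner (P1 x) y = cinner x (P1 y)" by (rule proj_sa[OF P1])
  have P2sa: "\<And>x y. cinner (P2 x) y = cinner x (P2 y)" by (rule proj_sa[OF P2])
  have P1fix: "\<And>a h. P1 (\<pi> a (V h)) = \<pi> a (V h)" by (rule proj_fix_gen[OF P1]) blast
  have P2fix: "\<And>A h. A \<in> sets M \<Longrightarrow> P2 (E A (V h)) = E A (V h)" by (rule proj_fix_gen[OF P2]) blast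
  have P1zero: "\<And>y. (\<And>a h. cinner (\<pi> a (V h)) y = 0) \<Longrightarrow> P1 y = 0"
    by (rule proj_zero[OF P1]) blast
  have P2zero: "\<And>y. (\<And>A h. A \<in> sets M \<Longrightarrow> cinner (E A (V h)) y = 0) \<Longrightarrow> P2 y = 0"
    by (rule proj_zero[OF P2]) blast
  have P1V[simp]: "\<And>h. P1 (V h) = V h" using P1fix[of 1] by (simp add: \<pi>1)
  have P2V[simp]: "\<And>h. P2 (V h) = V h" using P2fix[OF sX] by (simp add: EX)
  have P1W[simp]: "\<And>x. P1 (V (V' x)) = V (V' x)" using P1fix[of 1] by (simp add: \<pi>1)
  have P2W[simp]: "\<And>x. P2 (V (V' x)) = V (V' x)" using P2fix[OF sX] by (simp add: EX)
  have WP1[simp]: "\<And>x. V (V' (P1 x)) = V (V' x)"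
    by (rule cinner_ext) (simp add: hW[symmetric] P1sa[symmetric])
  have WP2[simp]: "\<And>x. V (V' (P2 x)) = V (V' x)"
    by (rule cinner_ext) (simp add: hW[symmetric] P2sa[symmetric])

  define Core where "Core \<longleftrightarrow> (\<forall>a. \<forall>A\<in>sets M. \<forall>h k.
     cinner (V k) (\<pi> a (E A (V h))) = cinner (V k) (\<pi> a (V (V' (E A (V h))))))"

  have QQ_WV: "\<And>h. V (V' (V h)) = V h" if QQ: "\<And>h. V' (V (V' (V h))) = V' (V h)"
  proof -
    fix h
    have "cinner (V h - V (V' (V h))) (V h - V (V' (V h))) =
          cinner (h - V' (V h)) (V' (V (h - V' (V h))))"
      by (simp add: Vdiff[symmetric] hV)
    also have "\<dots> = 0" by (simp add: Vdiff V'diff QQ)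
    finally show "V (V' (V h)) = V h" by (simp add: cinner_self_eq_0)
  qed
  have WW_QQ: "\<And>h. V' (V (V' (V h))) = V' (V h)" if WW: "\<And>x. V (V' (V (V' x))) = V (V' x)"
  proof -
    fix h
    have QQQ: "\<And>h. V' (V (V' (V (V' (V h))))) = V' (V (V' (V h)))" using WW by simp
    have Qsa: "\<And>x y. cinner (V' (V x)) y = cinner x (V' (V y))" by (simp add: hV[symmetric] hV2[symmetric])
    have "cinner (V' (V h) - V' (V (V' (V h)))) (V' (V h) - V' (V (V' (V h)))) =
          cinner (h - V' (V h)) (V' (V (V' (V (h - V' (V h))))))"
      by (simp add: Vdiff[symmetric] V'diff[symmetric] Qsa)
    also have "\<dots> = 0" by (simp add: Vdiff V'diff QQQ)
    finally show "V' (V (V' (V h))) = V' (V h)" by (simp add: cinner_self_eq_0 V'diff)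
  qed

  have dec_Core: "decomposable M I \<longleftrightarrow> Core"
  proof -
    have "decomposable M I \<longleftrightarrow> (\<forall>a. \<forall>A\<in>sets M. \<forall>h.
       V' (\<pi> a (E A (V h))) = V' (\<pi> a (V (V' (E A (V h))))))"
      unfolding decomposable_def instr_channel_def instr_obs_def
      by (simp add: IA sX EX \<pi>1 fun_eq_iff V'_def)
    also have "\<dots> \<longleftrightarrow> Core"
      unfolding Core_def
    proof (intro iffI allI ballI)
      fix a A h k assume H: "\<forall>a. \<forall>A\<in>sets M. \<forall>h. V' (\<pi> a (E A (V h))) = V' (\<pi> a (V (V' (E A (V h)))))"
        and A: "A \<in> sets M"
      show "cinner (V k) (\<pi> a (E A (V h))) = cinner (V k) (\<pi> a (V (V' (E A (V h)))))"
        using H A by (simp add: hV)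
    next
      fix a A h assume H: "\<forall>a. \<forall>A\<in>sets M. \<forall>h k. cinner (V k) (\<pi> a (E A (V h))) = cinner (V k) (\<pi> a (V (V' (E A (V h)))))"
        and A: "A \<in> sets M"
      show "V' (\<pi> a (E A (V h))) = V' (\<pi> a (V (V' (E A (V h)))))"
        by (rule cinner_ext) (use H A in \<open>simp add: hV[symmetric]\<close>)
    qed
    finally show ?thesis .
  qed

  have Core_WV: "\<And>h. V (V' (V h)) = V h" if C: Core
  proof (rule QQ_WV)
    fix h
    show "V' (V (V' (V h))) = V' (V h)"
    proof (rule cinner_ext)
      fix k
      have "cinner (V k) (\<pi> 1 (E (space M) (V h))) = cinner (V k) (\<pi> 1 (V (V' (E (space M) (V h)))))"
        using C sX unfolding Core_def by blast
      then show "cinner k (V' (V (V' (V h)))) = cinner k (V' (V h))"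
        by (simp add: \<pi>1 EX hV)
    qed
  qed
  have Core_WW: "\<And>x. V (V' (V (V' x))) = V (V' x)" if C: Core
    using Core_WV[OF C] by simp

  have ii_Core: "Core" if H: "\<forall>A\<in>sets M. \<forall>x. P1 (E A (P1 (V (V' x)))) = V (V' (P1 (E A (P1 (V (V' x))))))"
  proof -
    have WW: "\<And>x. V (V' (V (V' x))) = V (V' x)"
    proof -
      fix x
      have "P1 (E (space M) (P1 (V (V' x)))) = V (V' (P1 (E (space M) (P1 (V (V' x))))))"
        using H sX by blast
      then show "V (V' (V (V' x))) = V (V' x)" by (simp add: EX)
    qed
    have WV: "\<And>h. V (V' (V h)) = V h" by (rule QQ_WV) (rule WW_QQ[OF WW])
    show Core unfolding Core_def
    proof (intro allI ballI)
      fix a A h k assume A: "A \<in> sets M"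
      define y where "y = E A (V h) - V (V' (E A (V h)))"
      have "P1 (E A (P1 (V (V' (V h))))) = V (V' (P1 (E A (P1 (V (V' (V h)))))))"
        using H A by blast
      then have e: "P1 (E A (V h)) = V (V' (E A (V h)))" by (simp add: WV)
      have Py: "P1 y = 0" by (simp add: y_def P1diff e)
      have "cinner (V k) (\<pi> a y) = cinner (P1 (\<pi> (cstar a) (V k))) y"
        by (simp add: h\<pi>2 P1fix)
      also have "\<dots> = 0" by (simp add: P1sa Py)
      finally have "cinner (V k) (\<pi> a y) = 0" .
      then show "cinner (V k) (\<pi> a (E A (V h))) = cinner (V k) (\<pi> a (V (V' (E A (V h)))))"
        by (simp add: y_def \<pi>diff cinner_diff_right)
    qed
  qed
  have Core_ii: "P1 (E A (V (V' x))) = V (V' (E A (V (V' x)))) \<and>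
      V (V' (E A (V (V' x)))) = V (V' (E A (P1 x)))" if C: Core and A: "A \<in> sets M" for A x
  proof -
    have eq1: "P1 (E A (V (V' x))) = V (V' (E A (V (V' x))))" for x
    proof -
      define y where "y = E A (V (V' x)) - V (V' (E A (V (V' x))))"
      have "P1 y = 0"
      proof (rule P1zero)
        fix b k
        have "cinner (V k) (\<pi> (cstar b) (E A (V (V' x)))) = cinner (V k) (\<pi> (cstar b) (V (V' (E A (V (V' x))))))"
          using C A unfolding Core_def by blast
        then show "cinner (\<pi> b (V k)) y = 0"
          by (simp add: h\<pi> y_def \<pi>diff cinner_diff_right)
      qed
      then show ?thesis by (simp add: y_def P1diff)
    qed
    have eq2: "V (V' (E A (V (V' x)))) = V (V' (E A (P1 x)))"
    proof (rule cinner_ext)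
      fix z
      have "cinner z (V (V' (E A (P1 x)))) = cinner (P1 (E A (V (V' z)))) x"
        by (simp add: hW[symmetric] hE[OF A] P1sa)
      also have "\<dots> = cinner (V (V' (E A (V (V' z))))) x" by (simp add: eq1)
      also have "\<dots> = cinner z (V (V' (E A (V (V' x)))))"
        by (simp add: hW hE[OF A])
      finally show "cinner z (V (V' (E A (V (V' x))))) = cinner z (V (V' (E A (P1 x))))" by simp
    qed
    show ?thesis using eq1 eq2 by simp
  qed
  have part1: "decomposable M I \<longleftrightarrow>
           (\<forall>A\<in>sets M.
              P1 \<circ> E A \<circ> P1 \<circ> V \<circ> adj V = V \<circ> adj V \<circ> P1 \<circ> E A \<circ> P1 \<circ> V \<circ> adj V \<and>
              V \<circ> adj V \<circ> P1 \<circ> E A \<circ> P1 \<circ> V \<circ> adj V = V \<circ> adj V \<circ> P1 \<circ> E A \<circ> P1)"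
  proof
    assume "decomposable M I"
    then have C: Core using dec_Core by simp
    show "\<forall>A\<in>sets M.
              P1 \<circ> E A \<circ> P1 \<circ> V \<circ> adj V = V \<circ> adj V \<circ> P1 \<circ> E A \<circ> P1 \<circ> V \<circ> adj V \<and>
              V \<circ> adj V \<circ> P1 \<circ> E A \<circ> P1 \<circ> V \<circ> adj V = V \<circ> adj V \<circ> P1 \<circ> E A \<circ> P1"
      using Core_ii[OF C] Core_WW[OF C] by (simp add: fun_eq_iff V'_def[symmetric])
  next
    assume "\<forall>A\<in>sets M.
              P1 \<circ> E A \<circ> P1 \<circ> V \<circ> adj V = V \<circ> adj V \<circ> P1 \<circ> E A \<circ> P1 \<circ> V \<circ> adj V \<and>
              V \<circ> adj V \<circ> P1 \<circ> E A \<circ> P1 \<circ> V \<circ> adj V = V \<circ> adj V \<circ> P1 \<circ> E A \<circ> P1"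
    then have "\<forall>A\<in>sets M. \<forall>x. P1 (E A (P1 (V (V' x)))) = V (V' (P1 (E A (P1 (V (V' x))))))"
      unfolding V'_def by (simp add: fun_eq_iff)
    then have Core by (rule ii_Core)
    then show "decomposable M I" using dec_Core by simp
  qed

  have iii_Core: "Core" if H: "\<forall>a x. P2 (\<pi> a (P2 (V (V' x)))) = V (V' (P2 (\<pi> a (P2 (V (V' x))))))"
  proof -
    have WW: "\<And>x. V (V' (V (V' x))) = V (V' x)"
    proof -
      fix x
      have "P2 (\<pi> 1 (P2 (V (V' x)))) = V (V' (P2 (\<pi> 1 (P2 (V (V' x))))))"
        using H by blast
      then show "V (V' (V (V' x))) = V (V' x)" by (simp add: \<pi>1)
    qed
    have WV: "\<And>h. V (V' (V h)) = V h" by (rule QQ_WV) (rule WW_QQ[OF WW])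
    show Core unfolding Core_def
    proof (intro allI ballI)
      fix a A h k assume A: "A \<in> sets M"
      define y where "y = \<pi> (cstar a) (V k) - V (V' (\<pi> (cstar a) (V k)))"
      have "P2 (\<pi> (cstar a) (P2 (V (V' (V k))))) = V (V' (P2 (\<pi> (cstar a) (P2 (V (V' (V k)))))))"
        using H by blast
      then have e: "P2 (\<pi> (cstar a) (V k)) = V (V' (\<pi> (cstar a) (V k)))" by (simp add: WV)
      have Py: "P2 y = 0" by (simp add: y_def P2diff e)
      have "cinner y (E A (V h)) = cinner y (P2 (E A (V h)))" by (simp add: P2fix[OF A])
      also have "\<dots> = 0" by (simp add: P2sa[symmetric] Py)
      finally have "cinner y (E A (V h)) = 0" .
      then show "cinner (V k) (\<pi> a (E A (V h))) = cinner (V k) (\<pi> a (V (V' (E A (V h)))))"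
        by (simp add: y_def h\<pi>2 cinner_diff_left hW)
    qed
  qed
  have Core_iii: "P2 (\<pi> a (V (V' x))) = V (V' (\<pi> a (V (V' x)))) \<and>
      V (V' (\<pi> a (V (V' x)))) = V (V' (\<pi> a (P2 x)))" if C: Core for a x
  proof -
    have eq1: "P2 (\<pi> b (V (V' x))) = V (V' (\<pi> b (V (V' x))))" for b x
    proof -
      define y where "y = \<pi> b (V (V' x)) - V (V' (\<pi> b (V (V' x))))"
      have "P2 y = 0"
      proof (rule P2zero)
        fix A h assume A: "A \<in> sets M"
        have "cinner (V (V' x)) (\<pi> (cstar b) (E A (V h))) = cinner (V (V' x)) (\<pi> (cstar b) (V (V' (E A (V h)))))"
          using C A unfolding Core_def by blast
        then have "cinner (\<pi> b (V (V' x))) (E A (V h)) = cinner (V (V' (\<pi> b (V (V' x))))) (E A (V h))"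
          by (simp add: h\<pi>2 cstar_cstar hW)
        then have "cinner (E A (V h)) (\<pi> b (V (V' x))) = cinner (E A (V h)) (V (V' (\<pi> b (V (V' x)))))"
          by (subst (1 2) cinner_conj) simp
        then show "cinner (E A (V h)) y = 0"
          by (simp add: y_def cinner_diff_right)
      qed
      then show ?thesis by (simp add: y_def P2diff)
    qed
    have eq2: "V (V' (\<pi> a (V (V' x)))) = V (V' (\<pi> a (P2 x)))"
    proof (rule cinner_ext)
      fix z
      have "cinner z (V (V' (\<pi> a (P2 x)))) = cinner (P2 (\<pi> (cstar a) (V (V' z)))) x"
        by (simp add: hW[symmetric] h\<pi>2 P2sa)
      also have "\<dots> = cinner (V (V' (\<pi> (cstar a) (V (V' z))))) x" by (simp add: eq1)
      also have "\<dots> = cinner z (V (V' (\<pi> a (V (V' x)))))"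
        by (simp add: hW h\<pi> cstar_cstar)
      finally show "cinner z (V (V' (\<pi> a (V (V' x))))) = cinner z (V (V' (\<pi> a (P2 x))))" by simp
    qed
    show ?thesis using eq1 eq2 by simp
  qed
  have part2: "decomposable M I \<longleftrightarrow>
           (\<forall>a.
              P2 \<circ> \<pi> a \<circ> P2 \<circ> V \<circ> adj V = V \<circ> adj V \<circ> P2 \<circ> \<pi> a \<circ> P2 \<circ> V \<circ> adj V \<and>
              V \<circ> adj V \<circ> P2 \<circ> \<pi> a \<circ> P2 \<circ> V \<circ> adj V = V \<circ> adj V \<circ> \<pi> a \<circ> P2)"
  proof
    assume "decomposable M I"
    then have C: Core using dec_Core by simp
    show "\<forall>a.
              P2 \<circ> \<pi> a \<circ> P2 \<circ> V \<circ> adj V = V \<circ> adj V \<circ> P2 \<circ> \<pi> a \<circ> P2 \<circ> V \<circ> adj V \<and>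
              V \<circ> adj V \<circ> P2 \<circ> \<pi> a \<circ> P2 \<circ> V \<circ> adj V = V \<circ> adj V \<circ> \<pi> a \<circ> P2"
      using Core_iii[OF C] Core_WW[OF C] by (simp add: fun_eq_iff V'_def[symmetric])
  next
    assume "\<forall>a.
              P2 \<circ> \<pi> a \<circ> P2 \<circ> V \<circ> adj V = V \<circ> adj V \<circ> P2 \<circ> \<pi> a \<circ> P2 \<circ> V \<circ> adj V \<and>
              V \<circ> adj V \<circ> P2 \<circ> \<pi> a \<circ> P2 \<circ> V \<circ> adj V = V \<circ> adj V \<circ> \<pi> a \<circ> P2"
    then have "\<forall>a x. P2 (\<pi> a (P2 (V (V' x)))) = V (V' (P2 (\<pi> a (P2 (V (V' x))))))"
      unfolding V'_def by (simp add: fun_eq_iff)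
    then have Core by (rule iii_Core)
    then show "decomposable M I" using dec_Core by simp
  qed
  show ?thesis using part1 part2 by blast
qed

end
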